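(* Let $G$ be a (simple) graph on $n$ vertices, let $p\in(0,1)$, and let $a\ge 1$ be an integer. Then \[|t_{K_{2,a}}(f_{p,G})|\le 2\nu_{p,G}^a+2n^{-2/3}.\]
   Context: For a finite set $V$, $\Omega_V$ is $V$ with the uniform probability measure. For a graph $G$, $W_G\colon\Omega_{V(G)}^2\to[0,1]$ is $W_G(x,y)=1$ if $xy\in E(G)$ and $0$ otherwise (in particular $W_G(x,x)=0$). For $p\in(0,1)$, $f_{p,G}(x,y)=W_G(x,y)-p$, and \[\nu_{p,G}=\max_{x\neq y\in V(G)}\max\big(0,\ \mathbb{E}_z f_{p,G}(x,z)f_{p,G}(z,y)\big),\] with $z$ uniform on $V(G)$. For a graph $H$ and bounded symmetric $W$ on a probability space $\Omega$, $t_H(W)=\int_{\Omega^{V(H)}}\prod_{v_1v_2\in E(H)}W(x_{v_1},x_{v_2})\,d\mathbf{x}$ (product measure); $K_{2,a}$ is the complete bipartite graph with parts of sizes $2$ and $a$, so $t_{K_{2,a}}(f)=\mathbb{E}_{x,y}\big(\mathbb{E}_zf(x,z)f(z,y)\big)^a$. *)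

theory Defs
  imports Complex_Main
begin

definition simple_graph :: "'a set \<Rightarrow> ('a \<Rightarrow> 'a \<Rightarrow> bool) \<Rightarrow> bool" where
  "simple_graph V E \<longleftrightarrow> finite V \<and> V \<noteq> {} \<and>
     (\<forall>x y. E x y \<longrightarrow> x \<in> V \<and> y \<in> V) \<and>
     (\<forall>x y. E x y \<longrightarrow> E y x) \<and> (\<forall>x. \<not> E x x)"

definition WG :: "('a \<Rightarrow> 'a \<Rightarrow> bool) \<Rightarrow> 'a \<Rightarrow> 'a \<Rightarrow> real" where
  "WG E x y = (if E x y then 1 else 0)"

definition fpG :: "real \<Rightarrow> ('a \<Rightarrow> 'a \<Rightarrow> bool) \<Rightarrow> 'a \<Rightarrow> 'a \<Rightarrow> real" where
  "fpG p E x y = WG E x y - p"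

definition codeg :: "'a set \<Rightarrow> real \<Rightarrow> ('a \<Rightarrow> 'a \<Rightarrow> bool) \<Rightarrow> 'a \<Rightarrow> 'a \<Rightarrow> real" where
  "codeg V p E x y = (\<Sum>z\<in>V. fpG p E x z * fpG p E z y) / real (card V)"

definition nu :: "'a set \<Rightarrow> real \<Rightarrow> ('a \<Rightarrow> 'a \<Rightarrow> bool) \<Rightarrow> real" where
  "nu V p E = Max (insert 0 {codeg V p E x y | x y. x \<in> V \<and> y \<in> V \<and> x \<noteq> y})"

definition tK2a :: "'a set \<Rightarrow> real \<Rightarrow> ('a \<Rightarrow> 'a \<Rightarrow> bool) \<Rightarrow> nat \<Rightarrow> real" where
  "tK2a V p E a = (\<Sum>x\<in>V. \<Sum>y\<in>V. (codeg V p E x y) ^ a) / (real (card V))^2"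

end

theory Submission
  imports Defs
begin

lemma young_aux:
  fixes u :: real assumes u: "0 \<le> u"
  shows "real (a+1) * u^a \<le> real a * u^(a+1) + 1"
proof (induction a)
  case 0 show ?case by simp
next
  case (Suc a)
  have h1: "u * (real (a+1) * u^a) \<le> u * (real a * u^(a+1) + 1)"
    using Suc.IH u by (rule mult_left_mono)
  have h2: "0 \<le> (u - 1) * (u^(a+1) - 1)"
  proof (cases "u \<le> 1")
    case True
    then have "u^(a+1) \<le> 1" using u by (intro power_le_one)
    then show ?thesis using True by (simp add: mult_nonpos_nonpos)
  next
    case False
    then have "1 \<le> u^(a+1)" by (intro one_le_power) simp
    then show ?thesis using False by simp
  qed
  have e1: "u * (real (a+1) * u^a) = real (a+1) * u^(a+1)" by (simp add: algebra_simps)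
  have e2: "u * (real a * u^(a+1) + 1) = real a * u^(a+2) + u" by (simp add: algebra_simps)
  have e3: "(u - 1) * (u^(a+1) - 1) = u^(a+2) - u^(a+1) - u + 1" by (simp add: algebra_simps)
  show ?case using h1 h2 e1 e2 e3 by (simp add: algebra_simps)
qed

lemma young:
  fixes s t :: real assumes s: "0 \<le> s" and t: "0 < t"
  shows "s^a \<le> (real a / real (a+1)) * s^(a+1) / t + t^a / real (a+1)"
proof -
  have "real (a+1) * (s/t)^a \<le> real a * (s/t)^(a+1) + 1"
    by (rule young_aux) (use s t in simp)
  then have "t^a * (real (a+1) * (s/t)^a) \<le> t^a * (real a * (s/t)^(a+1) + 1)"
    using t by (simp add: mult_left_mono)
  moreover have "t^a * (s/t)^a = s^a" using t by (simp add: power_divide)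
  moreover have "t^a * (s/t)^(a+1) = s^(a+1) / t" using t
    by (simp add: power_divide field_simps)
  ultimately have "real (a+1) * s^a \<le> real a * (s^(a+1)/t) + t^a"
    by (simp add: algebra_simps)
  then have "s^a \<le> (real a * (s^(a+1)/t) + t^a) / real (a+1)"
    by (simp add: le_divide_eq mult.commute)
  also have "\<dots> = (real a / real (a+1)) * s^(a+1) / t + t^a / real (a+1)"
    by (simp add: add_divide_distrib ac_simps)
  finally show ?thesis .
qed

lemma gram_pos:
  fixes V :: "'a set" and g :: "'a \<Rightarrow> 'a \<Rightarrow> real" and k :: real
  assumes "0 \<le> k"
  shows "0 \<le> (\<Sum>x\<in>V. \<Sum>y\<in>V. w x * w y * ((\<Sum>z\<in>V. g x z * g y z) / k)^m)"
proof (induction m arbitrary: w)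
  case 0
  have "(\<Sum>x\<in>V. \<Sum>y\<in>V. w x * w y) = (sum w V) * (sum w V)"
    by (simp add: sum_product)
  then show ?case by simp
next
  case (Suc m)
  define c where "c x y = (\<Sum>z\<in>V. g x z * g y z) / k" for x y
  have pt: "w x * w y * c x y ^ Suc m
      = (\<Sum>z\<in>V. (w x * g x z) * (w y * g y z) * c x y ^ m) / k" for x y
  proof -
    have "w x * w y * c x y ^ Suc m = (w x * w y * c x y ^ m) * (\<Sum>z\<in>V. g x z * g y z) / k"
      by (simp add: c_def algebra_simps)
    also have "\<dots> = (\<Sum>z\<in>V. (w x * w y * c x y ^ m) * (g x z * g y z)) / k"
      by (simp add: sum_distrib_left)
    also have "\<dots> = (\<Sum>z\<in>V. (w x * g x z) * (w y * g y z) * c x y ^ m) / k"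
      by (simp add: algebra_simps)
    finally show ?thesis .
  qed
  have "(\<Sum>x\<in>V. \<Sum>y\<in>V. w x * w y * c x y ^ Suc m)
      = (\<Sum>x\<in>V. \<Sum>y\<in>V. \<Sum>z\<in>V. (w x * g x z) * (w y * g y z) * c x y ^ m) / k"
    by (simp only: pt sum_divide_distrib)
  also have "\<dots> = (\<Sum>z\<in>V. \<Sum>x\<in>V. \<Sum>y\<in>V. (w x * g x z) * (w y * g y z) * c x y ^ m) / k"
  proof -
    have "(\<Sum>x\<in>V. \<Sum>y\<in>V. \<Sum>z\<in>V. (w x * g x z) * (w y * g y z) * c x y ^ m)
       = (\<Sum>x\<in>V. \<Sum>z\<in>V. \<Sum>y\<in>V. (w x * g x z) * (w y * g y z) * c x y ^ m)"
      by (rule sum.cong[OF refl], rule sum.swap)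
    also have "\<dots> = (\<Sum>z\<in>V. \<Sum>x\<in>V. \<Sum>y\<in>V. (w x * g x z) * (w y * g y z) * c x y ^ m)"
      by (rule sum.swap)
    finally show ?thesis by simp
  qed
  finally have eq: "(\<Sum>x\<in>V. \<Sum>y\<in>V. w x * w y * c x y ^ Suc m)
      = (\<Sum>z\<in>V. \<Sum>x\<in>V. \<Sum>y\<in>V. (w x * g x z) * (w y * g y z) * c x y ^ m) / k" .
  have "0 \<le> (\<Sum>z\<in>V. \<Sum>x\<in>V. \<Sum>y\<in>V. (w x * g x z) * (w y * g y z) * c x y ^ m)"
    by (rule sum_nonneg) (use Suc.IH[of "\<lambda>x. w x * g x _"] in \<open>simp add: c_def\<close>)
  then show ?case using eq assms by (simp add: c_def)
qed


theorem proposition3p6: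
  fixes V :: "'a set" and E :: "'a \<Rightarrow> 'a \<Rightarrow> bool" and p :: real and a :: nat
  assumes "simple_graph V E" and "0 < p" and "p < 1" and "1 \<le> a"
  shows "\<bar>tK2a V p E a\<bar> \<le> 2 * (nu V p E) ^ a + 2 * real (card V) powr (-2/3)"
proof -
  have fin: "finite V" and ne: "V \<noteq> {}" and symE: "\<And>x y. E x y \<Longrightarrow> E y x"
    using assms(1) unfolding simple_graph_def by auto
  define n where "n = real (card V)"
  have n1: "1 \<le> n" using fin ne by (simp add: n_def Suc_leI card_gt_0_iff)
  define C where "C = codeg V p E"
  have fsym: "fpG p E z y = fpG p E y z" for y z
  proof -
    have "E z y = E y z" using symE by blast
    then show ?thesis by (simp add: fpG_def WG_def)
  qed
  have Cg: "C x y = (\<Sum>z\<in>V. fpG p E x z * fpG p E y z) / n" for x y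
    unfolding C_def codeg_def n_def using fsym by simp
  have Snn: "0 \<le> (\<Sum>x\<in>V. \<Sum>y\<in>V. C x y ^ m)" for m
  proof -
    have "0 \<le> (\<Sum>x\<in>V. \<Sum>y\<in>V. (\<lambda>_. 1::real) x * (\<lambda>_. 1) y *
             ((\<Sum>z\<in>V. fpG p E x z * fpG p E y z) / n)^m)"
      by (rule gram_pos) (use n1 in simp)
    then show ?thesis by (simp add: Cg)
  qed
  have fsq: "fpG p E x z * fpG p E x z \<le> 1" for x z
  proof (cases "E x z")
    case True
    then have "fpG p E x z = 1 - p" by (simp add: fpG_def WG_def)
    then show ?thesis using assms(2,3) by (simp add: mult_le_one)
  next
    case False
    then have "fpG p E x z = - p" by (simp add: fpG_def WG_def)
    then show ?thesis using assms(2,3) by (simp add: mult_le_one)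
  qed
  have diag0: "0 \<le> C x x" for x
    unfolding Cg using n1 by (intro divide_nonneg_pos sum_nonneg) auto
  have diag1: "C x x \<le> 1" for x
  proof -
    have "(\<Sum>z\<in>V. fpG p E x z * fpG p E x z) \<le> (\<Sum>z\<in>V. 1)"
      by (rule sum_mono) (rule fsq)
    then have "(\<Sum>z\<in>V. fpG p E x z * fpG p E x z) \<le> n" by (simp add: n_def)
    then show ?thesis unfolding Cg using n1 by simp
  qed
  define Off where "Off = {codeg V p E x y | x y. x \<in> V \<and> y \<in> V \<and> x \<noteq> y}"
  have finOff: "finite Off"
  proof (rule finite_subset)
    show "Off \<subseteq> (\<lambda>(x,y). codeg V p E x y) ` (V \<times> V)" unfolding Off_def by auto
    show "finite ((\<lambda>(x,y). codeg V p E x y) ` (V \<times> V))" using fin by simp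
  qed
  define \<nu> where "\<nu> = nu V p E"
  have nu0: "0 \<le> \<nu>" unfolding \<nu>_def nu_def Off_def[symmetric]
    using finOff by (intro Max_ge) auto
  have off: "C x y \<le> \<nu>" if "x \<in> V" "y \<in> V" "x \<noteq> y" for x y
  proof -
    have "C x y \<in> insert 0 Off" unfolding Off_def C_def using that by blast
    then show ?thesis unfolding \<nu>_def nu_def Off_def[symmetric]
      using finOff by (intro Max_ge) auto
  qed
  define R where "R = n powr (1/3)"
  have R1: "1 \<le> R" unfolding R_def using n1 by (intro ge_one_powr_ge_zero) auto
  have R3: "R^3 = n" unfolding R_def using n1 by (simp add: powr_power)
  have R2: "n powr (-2/3) = 1 / R^2"
  proof -
    have "n powr (-2/3) = n powr (-(2/3))" by simp
    also have "\<dots> = 1 / n powr (2/3)" by (rule powr_minus_divide)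
    also have "n powr (2/3) = R^2" unfolding R_def using n1 by (simp add: powr_power)
    finally show ?thesis .
  qed
  have R6: "R^3 * R^3 = R^6" by (simp flip: power_add)
  have R42: "R^4 * R^2 = R^6" by (simp flip: power_add)
  have R43: "R^4 = R^3 * R" by (simp flip: power_Suc2)
  have nR: "n \<le> R^4"
  proof -
    have "R^3 * 1 \<le> R^3 * R" using R1 by (intro mult_left_mono) auto
    then show ?thesis using R3 R43 by simp
  qed
  define S where "S = (\<Sum>x\<in>V. \<Sum>y\<in>V. C x y ^ a)"
  have tS: "tK2a V p E a = S / n^2" unfolding tK2a_def S_def C_def n_def by simp
  have S0: "0 \<le> S" unfolding S_def by (rule Snn)
  have Sdelta: "(\<Sum>x\<in>V. \<Sum>y\<in>V. (if x = y then A else 0) + B) = n * A + n * n * B" for A B :: real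
    using fin by (simp add: sum.distrib n_def algebra_simps)
  have Sbound: "S \<le> 2 * \<nu>^a * n^2 + 2 * R^4"
  proof (cases "even a")
    case False
    have pt: "C x y ^ a \<le> (if x = y then 1 else 0) + \<nu>^a" if "x \<in> V" "y \<in> V" for x y
    proof (cases "x = y")
      case True
      have "C x y ^ a \<le> 1" using True diag0[of x] diag1[of x] by (simp add: power_le_one)
      moreover have "0 \<le> \<nu>^a" using nu0 by simp
      ultimately show ?thesis using True by simp
    next
      case ne: False
      show ?thesis
      proof (cases "0 \<le> C x y")
        case True
        then have "C x y ^ a \<le> \<nu> ^ a" using off[OF that ne] by (intro power_mono)
        then show ?thesis using ne by simp
      next
        case neg: False
        then have "C x y ^ a < 0" using False by (simp add: power_less_zero_eq)
        moreover have "0 \<le> \<nu>^a" using nu0 by simp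
        ultimately have "C x y ^ a \<le> \<nu>^a" by linarith
        then show ?thesis using ne by simp
      qed
    qed
    have "S \<le> (\<Sum>x\<in>V. \<Sum>y\<in>V. (if x = y then 1 else 0) + \<nu>^a)"
      unfolding S_def by (intro sum_mono pt)
    also have "\<dots> = n + n * n * \<nu>^a" using Sdelta[of 1 "\<nu>^a"] by simp
    also have "\<dots> \<le> 2 * \<nu>^a * n^2 + 2 * R^4"
    proof -
      have "n \<le> R^4" by (rule nR)
      moreover have "0 \<le> n * (n * \<nu>^a)" using n1 nu0 by simp
      ultimately show ?thesis using n1 by (simp add: power2_eq_square)
    qed
    finally show ?thesis .
  next
    case True
    define \<tau> where "\<tau> = max \<nu> (1/R)"
    have tau0: "0 < \<tau>" unfolding \<tau>_def using R1 by (simp add: less_max_iff_disj)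
    have taunu: "\<nu> \<le> \<tau>" and tauR: "1/R \<le> \<tau>" unfolding \<tau>_def by auto
    define \<alpha> where "\<alpha> = real a / real (a+1)"
    define \<beta> where "\<beta> = 1 / real (a+1)"
    have ab: "\<alpha> + \<beta> = 1" unfolding \<alpha>_def \<beta>_def by (simp add: field_simps)
    have a0: "0 \<le> \<alpha>" "\<alpha> \<le> 1" "0 \<le> \<beta>" "\<beta> \<le> 1" unfolding \<alpha>_def \<beta>_def by auto
    define \<kappa> where "\<kappa> = \<alpha> / \<tau>"
    have k0: "0 \<le> \<kappa>" unfolding \<kappa>_def using a0 tau0 by simp
    have a2: "2 \<le> a" using True assms(4) by presburger
    have tpow: "\<tau>^a \<le> \<nu>^a + 1/R^2"
    proof -
      have "(1/R)^a \<le> (1/R)^2" using R1 a2 by (intro power_decreasing) auto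
      then have r: "(1/R)^a \<le> 1/R^2" by (simp add: power_divide)
      show ?thesis
      proof (cases "\<nu> \<le> 1/R")
        case True then have "\<tau> = 1/R" unfolding \<tau>_def by simp
        moreover have "0 \<le> \<nu>^a" using nu0 by simp
        ultimately show ?thesis using r by simp
      next
        case False then have "\<tau> = \<nu>" unfolding \<tau>_def by simp
        then show ?thesis using R1 by simp
      qed
    qed
    define A where "A = 1 + \<kappa>"
    define B where "B = 2 * \<nu>^a + \<beta> / R^2"
    have pt: "C x y ^ a \<le> ((if x = y then A else 0) + B) - \<kappa> * C x y ^ (a+1)"
      if "x \<in> V" "y \<in> V" for x y
    proof -
      have B0: "0 \<le> B" unfolding B_def using nu0 a0 by simp
      show ?thesis
      proof (cases "x = y")
        case True
        have "C x y ^ a \<le> 1" using diag0[of x] diag1[of x] True by (simp add: power_le_one)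
        moreover have "C x y ^ (a+1) \<le> 1" using diag0[of x] diag1[of x] True by (intro power_le_one) auto
        moreover have "\<kappa> * C x y ^ (a+1) \<le> \<kappa> * 1"
          using calculation(2) k0 by (rule mult_left_mono)
        ultimately have "C x y ^ a + \<kappa> * C x y ^ (a+1) \<le> 1 + \<kappa>"
          by linarith
        then show ?thesis using True B0 unfolding A_def by simp
      next
        case ne: False
        show ?thesis
        proof (cases "0 \<le> C x y")
          case True
          have cn: "C x y \<le> \<nu>" using off[OF that ne] .
          have p1: "C x y ^ a \<le> \<nu> ^ a" using True cn by (intro power_mono)
          have "C x y ^ (a+1) = C x y * C x y ^ a" by simp
          also have "\<dots> \<le> \<tau> * C x y ^ a" using cn taunu True by (intro mult_right_mono) auto
          finally have "\<kappa> * C x y ^ (a+1) \<le> \<kappa> * (\<tau> * C x y ^ a)" using k0 by (rule mult_left_mono)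
          also have "\<dots> = \<alpha> * C x y ^ a" unfolding \<kappa>_def using tau0 by simp
          also have "\<dots> \<le> 1 * C x y ^ a" using a0 True by (intro mult_right_mono) auto
          finally have "C x y ^ a + \<kappa> * C x y ^ (a+1) \<le> 2 * \<nu>^a" using p1 by simp
          moreover have "0 \<le> \<beta> / R^2" using a0 by simp
          ultimately show ?thesis using ne unfolding B_def by simp
        next
          case neg: False
          define s where "s = - C x y"
          have s0: "0 \<le> s" using neg s_def by simp
          have e1: "C x y ^ a = s ^ a" unfolding s_def using True by (simp add: power_minus_even)
          have "odd (a+1)" using True by simp
          then have e2: "C x y ^ (a+1) = - (s ^ (a+1))" unfolding s_def
            by (metis minus_minus power_minus_odd)
          have y: "s^a \<le> \<alpha> * s^(a+1) / \<tau> + \<tau>^a / real (a+1)"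
            unfolding \<alpha>_def by (rule young[OF s0 tau0])
          have "\<alpha> * s^(a+1) / \<tau> = \<kappa> * s^(a+1)" unfolding \<kappa>_def by simp
          moreover have "\<tau>^a / real (a+1) = \<beta> * \<tau>^a" unfolding \<beta>_def by simp
          moreover have "\<beta> * \<tau>^a \<le> \<beta> * (\<nu>^a + 1/R^2)" using tpow a0 by (intro mult_left_mono)
          moreover have "\<beta> * \<nu>^a \<le> 2 * \<nu>^a"
          proof -
            have "\<beta> * \<nu>^a \<le> 1 * \<nu>^a" using a0 nu0 by (intro mult_right_mono) auto
            moreover have "0 \<le> \<nu>^a" using nu0 by simp
            ultimately show ?thesis by linarith
          qed
          ultimately have "s^a \<le> \<kappa> * s^(a+1) + B" using y unfolding B_def
            by (simp add: algebra_simps)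
          then show ?thesis using e1 e2 ne by simp
        qed
      qed
    qed
    have "S \<le> (\<Sum>x\<in>V. \<Sum>y\<in>V. ((if x = y then A else 0) + B) - \<kappa> * C x y ^ (a+1))"
      unfolding S_def by (intro sum_mono pt)
    also have "\<dots> = (n * A + n * n * B) - \<kappa> * (\<Sum>x\<in>V. \<Sum>y\<in>V. C x y ^ (a+1))"
      using Sdelta[of A B] by (simp add: sum_subtractf sum_distrib_left)
    also have "\<dots> \<le> n * A + n * n * B" using k0 Snn[of "a+1"] by simp
    also have "\<dots> \<le> 2 * \<nu>^a * n^2 + 2 * R^4"
    proof -
      have "n * \<kappa> = \<alpha> * (R^3 / \<tau>)" unfolding \<kappa>_def R3 by simp
      also have "R^3 / \<tau> \<le> R^3 * R"
      proof -
        have "R * (1/R) \<le> R * \<tau>" using tauR R1 by (intro mult_left_mono) auto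
        then have "1 \<le> R * \<tau>" using R1 by simp
        then have "1 / \<tau> \<le> R" using tau0 by (simp add: divide_le_eq mult.commute)
        then have "R^3 * (1/\<tau>) \<le> R^3 * R" using R1 by (intro mult_left_mono) auto
        then show ?thesis by simp
      qed
      then have "\<alpha> * (R^3 / \<tau>) \<le> \<alpha> * (R^3 * R)" using a0 by (intro mult_left_mono)
      finally have t1: "n * \<kappa> \<le> \<alpha> * R^4" by (simp only: R43)
      have t2: "n * n * (\<beta> / R^2) = \<beta> * R^4"
      proof -
        have "n * n = R^6" using R3 R6 by simp
        then show ?thesis using R1 by (simp add: field_simps power_add[symmetric] eval_nat_numeral)
      qed
      have "n * A + n * n * B = n + n * \<kappa> + 2 * \<nu>^a * n^2 + n * n * (\<beta> / R^2)"
        unfolding A_def B_def by (simp add: algebra_simps power2_eq_square)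
      moreover have "\<alpha> * R^4 + \<beta> * R^4 = R^4"
      proof -
        have "\<alpha> * R^4 + \<beta> * R^4 = (\<alpha> + \<beta>) * R^4" by (simp add: algebra_simps)
        then show ?thesis using ab by simp
      qed
      ultimately show ?thesis using t1 t2 nR by linarith
    qed
    finally show ?thesis .
  qed
  have "\<bar>tK2a V p E a\<bar> = S / n^2" using tS S0 by simp
  also have "\<dots> \<le> (2 * \<nu>^a * n^2 + 2 * R^4) / n^2" using Sbound n1 by (simp add: divide_right_mono)
  also have "\<dots> = 2 * \<nu>^a + 2 * (R^4 / n^2)" using n1 by (simp add: field_simps)
  also have "R^4 / n^2 = 1 / R^2"
  proof -
    have "n^2 = R^4 * R^2" using R3 R6 R42 by (simp add: power2_eq_square)
    moreover have "R^4 / (R^4 * R^2) = 1 / R^2"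
    proof -
      have "R^4 / (R^4 * R^2) = (R^4 / R^4) / R^2" by (simp only: divide_divide_eq_left)
      also have "R^4 / R^4 = 1" using R1 by simp
      finally show ?thesis .
    qed
    ultimately show ?thesis by simp
  qed
  finally show ?thesis unfolding \<nu>_def n_def[symmetric] using R2 by simp
qed

end
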